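(* For $n\in\mathbb{N}^\star$ and $x\ge0$ let $\phi_n(x)=\int_0^\pi e^{-2x\sin\eta}e^{2in\eta}\,\mathrm{d}\eta$. Then for every $n\ge1$ and every $x>0$ we have $\phi_n(x)>0$, and for every fixed $x>0$ the sequence $n\mapsto\phi_n(x)$ is strictly decreasing.
   Context: The function $\phi_n$ is real-valued (its imaginary part vanishes by the symmetry $\eta\mapsto\pi-\eta$). *)

theory Defs
  imports "HOL-Analysis.Analysis"
begin

definition phi :: "nat \<Rightarrow> real \<Rightarrow> complex" where
  "phi n x = integral {0..pi}
     (\<lambda>\<eta>. complex_of_real (exp (- 2 * x * sin \<eta>)) * exp (\<i> * of_real (2 * real n * \<eta>)))"

end

theory Submission
  imports Defs
begin


lemma nolocmin:
  fixes D Dp Dq c :: "real \<Rightarrow> real"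
  assumes d1: "\<And>x. (D has_real_derivative Dp x) (at x)"
    and d2: "\<And>x. (Dp has_real_derivative Dq x) (at x)"
    and L: "\<And>x. x > 0 \<Longrightarrow> x\<^sup>2 * Dq x + x * Dp x - c x * D x < 0"
    and c: "\<And>x. c x \<ge> 0"
    and z: "z > 0" "D z \<le> 0" and e: "e > 0" and mn: "\<And>y. \<bar>y - z\<bar> < e \<Longrightarrow> D z \<le> D y"
  shows False
proof -
  have Dpz: "Dp z = 0"
    by (rule DERIV_local_min[OF d1 e]) (use mn in \<open>auto simp: abs_minus_commute\<close>)
  have Dqz: "Dq z \<ge> 0"
  proof (rule ccontr)
    assume "\<not> Dq z \<ge> 0"
    then have "Dq z < 0" by simp
    from DERIV_neg_dec_right[OF d2 this] obtain d where d: "d > 0"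
      "\<And>h. h > 0 \<Longrightarrow> h < d \<Longrightarrow> Dp z > Dp (z + h)" by blast
    define h where "h = min d e / 2"
    have h: "h > 0" "h < d" "h < e" using d e by (auto simp: h_def)
    obtain \<xi> where xi: "z < \<xi>" "\<xi> < z + h" "D (z + h) - D z = (z + h - z) * Dp \<xi>"
      using MVT2[of z "z + h" D Dp] d1 h by auto
    have "Dp (z + (\<xi> - z)) < Dp z" using d(2)[of "\<xi> - z"] xi h by auto
    then have "Dp \<xi> < 0" using Dpz by simp
    then have "h * Dp \<xi> < 0" using h by (simp add: mult_pos_neg)
    then have "D (z + h) < D z" using xi by simp
    moreover have "D z \<le> D (z + h)" using mn[of "z + h"] h by simp
    ultimately show False by simp
  qed
  have "z\<^sup>2 * Dq z \<ge> 0" using Dqz by simp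
  moreover have "c z * D z \<le> 0" using c[of z] z by (simp add: mult_nonneg_nonpos)
  ultimately have "z\<^sup>2 * Dq z + z * Dp z - c z * D z \<ge> 0" using Dpz by simp
  with L[OF z(1)] show False by simp
qed

lemma maxp:
  fixes D Dp Dq c :: "real \<Rightarrow> real"
  assumes d1: "\<And>x. (D has_real_derivative Dp x) (at x)"
    and d2: "\<And>x. (Dp has_real_derivative Dq x) (at x)"
    and L: "\<And>x. x > 0 \<Longrightarrow> x\<^sup>2 * Dq x + x * Dp x - c x * D x < 0"
    and c: "\<And>x. c x \<ge> 0"
    and D0: "D 0 = 0" and lim: "(\<lambda>k. D (real k)) \<longlonglongrightarrow> 0"
    and x: "x > 0"
  shows "D x > 0"
proof -
  have cont: "continuous_on S D" for S
    using d1 by (meson DERIV_isCont continuous_at_imp_continuous_on)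
  have nn: "D y \<ge> 0" if y: "y > 0" for y
  proof (rule ccontr)
    assume "\<not> D y \<ge> 0"
    then have neg: "D y < 0" by simp
    from lim have "\<forall>\<^sub>F k in sequentially. dist (D (real k)) 0 < - D y"
      using neg by (auto simp: tendsto_iff)
    moreover have "\<forall>\<^sub>F k in sequentially. real k > y"
      using filterlim_real_sequentially unfolding filterlim_at_top_dense by blast
    ultimately obtain k where k: "dist (D (real k)) 0 < - D y" "real k > y"
      by (metis (mono_tags, lifting) eventually_conj_iff eventually_sequentially order_refl)
    have Dk: "D (real k) > D y" using k(1) by (auto simp: dist_real_def)
    obtain z where z: "z \<in> {0..real k}" "\<And>w. w \<in> {0..real k} \<Longrightarrow> D z \<le> D w"
      using continuous_attains_inf[of "{0..real k}" D] cont k(2) y by auto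
    have "D z \<le> D y" using z y k(2) by auto
    then have "z \<noteq> 0" "z \<noteq> real k" using neg D0 Dk by auto
    then have zi: "0 < z" "z < real k" using z(1) by auto
    show False
    proof (rule nolocmin[OF d1 d2 L c zi(1)])
      show "D z \<le> 0" using \<open>D z \<le> D y\<close> neg by simp
      show "min z (real k - z) > 0" using zi by simp
      fix w assume "\<bar>w - z\<bar> < min z (real k - z)"
      then show "D z \<le> D w" by (intro z(2)) auto
    qed
  qed
  show ?thesis
  proof (rule ccontr)
    assume "\<not> D x > 0"
    then have "D x \<le> 0" by simp
    show False
    proof (rule nolocmin[OF d1 d2 L c x \<open>D x \<le> 0\<close> x])
      fix w assume "\<bar>w - x\<bar> < x"
      then have "w > 0" by auto
      then show "D x \<le> D w" using nn[of w] \<open>D x \<le> 0\<close> by simp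
    qed
  qed
qed



definition fc :: "nat \<Rightarrow> real \<Rightarrow> real" where
  "fc n x = integral {0..pi} (\<lambda>t. cos (2 * real n * t) * exp (- 2 * x * sin t))"

lemma deriv_gen:
  fixes a :: "real \<Rightarrow> real"
  assumes ca: "continuous_on UNIV a"
  shows "((\<lambda>x. integral {0..pi} (\<lambda>t. a t * exp (- 2 * x * sin t))) has_real_derivative
           integral {0..pi} (\<lambda>t. (- 2 * sin t * a t) * exp (- 2 * x * sin t))) (at x)"
proof -
  have ca2: "continuous_on (UNIV \<times> cbox 0 pi) (\<lambda>p. a (snd p))"
    by (rule continuous_on_compose2[OF ca continuous_on_snd]) auto
  have "((\<lambda>x. integral (cbox 0 pi) (\<lambda>t. a t * exp (- 2 * x * sin t))) has_field_derivative
           integral (cbox 0 pi) (\<lambda>t. (- 2 * sin t * a t) * exp (- 2 * x * sin t))) (at x within UNIV)"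
  proof (rule leibniz_rule_field_derivative)
    fix x t :: real
    show "((\<lambda>x. a t * exp (- 2 * x * sin t)) has_field_derivative (- 2 * sin t * a t) * exp (- 2 * x * sin t)) (at x within UNIV)"
      by (auto intro!: derivative_eq_intros)
  next
    fix x :: real
    show "(\<lambda>t. a t * exp (- 2 * x * sin t)) integrable_on cbox 0 pi"
      by (intro integrable_continuous continuous_intros continuous_on_subset[OF ca]) auto
  next
    show "continuous_on (UNIV \<times> cbox 0 pi) (\<lambda>(x, t). (- 2 * sin t * a t) * exp (- 2 * x * sin t))"
      unfolding case_prod_beta
      by (intro continuous_intros ca2)
  qed auto
  then show ?thesis by (simp add: cbox_interval)
qed

lemma ftc_main:
  fixes x :: real and n :: nat
  shows "((\<lambda>t. (4 * x\<^sup>2 * (cos t)\<^sup>2 + 2 * x * sin t + 4 * (real n)\<^sup>2) * (cos (2 * real n * t) * exp (- 2 * x * sin t)))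
          has_integral (4 * x)) {0..pi}"
proof -
  define H where "H t = - 2 * x * cos t * exp (- 2 * x * sin t) * cos (2 * real n * t)
      + 2 * real n * exp (- 2 * x * sin t) * sin (2 * real n * t)" for t
  have der: "(H has_real_derivative (4 * x\<^sup>2 * (cos t)\<^sup>2 + 2 * x * sin t + 4 * (real n)\<^sup>2) * (cos (2 * real n * t) * exp (- 2 * x * sin t))) (at t)" for t
  proof -
    have "(H has_real_derivative
        (- 2 * x * (- sin t) * exp (- 2 * x * sin t) * cos (2 * real n * t)
         + (- 2 * x * cos t) * (exp (- 2 * x * sin t) * (- 2 * x * cos t)) * cos (2 * real n * t)
         + (- 2 * x * cos t) * exp (- 2 * x * sin t) * (- sin (2 * real n * t) * (2 * real n))
         + 2 * real n * (exp (- 2 * x * sin t) * (- 2 * x * cos t)) * sin (2 * real n * t)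
         + 2 * real n * exp (- 2 * x * sin t) * (cos (2 * real n * t) * (2 * real n)))) (at t)"
      unfolding H_def by (auto intro!: derivative_eq_intros simp: algebra_simps)
    moreover have "- 2 * x * (- sin t) * exp (- 2 * x * sin t) * cos (2 * real n * t)
         + (- 2 * x * cos t) * (exp (- 2 * x * sin t) * (- 2 * x * cos t)) * cos (2 * real n * t)
         + (- 2 * x * cos t) * exp (- 2 * x * sin t) * (- sin (2 * real n * t) * (2 * real n))
         + 2 * real n * (exp (- 2 * x * sin t) * (- 2 * x * cos t)) * sin (2 * real n * t)
         + 2 * real n * exp (- 2 * x * sin t) * (cos (2 * real n * t) * (2 * real n))
       = (4 * x\<^sup>2 * (cos t)\<^sup>2 + 2 * x * sin t + 4 * (real n)\<^sup>2) * (cos (2 * real n * t) * exp (- 2 * x * sin t))"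
      unfolding power2_eq_square by algebra
    ultimately show ?thesis by simp
  qed
  have der2: "(H has_vector_derivative (4 * x\<^sup>2 * (cos t)\<^sup>2 + 2 * x * sin t + 4 * (real n)\<^sup>2) * (cos (2 * real n * t) * exp (- 2 * x * sin t))) (at t within {0..pi})" for t
    using der[of t] unfolding has_real_derivative_iff_has_vector_derivative by (rule has_vector_derivative_at_within)
  have "((\<lambda>t. (4 * x\<^sup>2 * (cos t)\<^sup>2 + 2 * x * sin t + 4 * (real n)\<^sup>2) * (cos (2 * real n * t) * exp (- 2 * x * sin t)))
          has_integral (H pi - H 0)) {0..pi}"
    by (rule fundamental_theorem_of_calculus[OF pi_ge_zero der2])
  moreover have "H pi - H 0 = 4 * x"
  proof -
    have "sin (2 * real n * pi) = 0"
      by (metis mult.commute mult.left_commute sin_npi of_nat_mult of_nat_numeral)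
    moreover have "cos (2 * real n * pi) = 1"
      by (metis cos_one_2pi_int mult.commute mult.left_commute of_int_of_nat_eq)
    ultimately show ?thesis by (simp add: H_def)
  qed
  ultimately show ?thesis by simp
qed

definition f1 :: "nat \<Rightarrow> real \<Rightarrow> real" where
  "f1 n x = integral {0..pi} (\<lambda>t. (- 2 * sin t * cos (2 * real n * t)) * exp (- 2 * x * sin t))"
definition f2 :: "nat \<Rightarrow> real \<Rightarrow> real" where
  "f2 n x = integral {0..pi} (\<lambda>t. (- 2 * sin t * (- 2 * sin t * cos (2 * real n * t))) * exp (- 2 * x * sin t))"

lemma fc_deriv: "(fc n has_real_derivative f1 n x) (at x)"
proof -
  have "continuous_on UNIV (\<lambda>t. cos (2 * real n * t))" by (intro continuous_intros)
  from deriv_gen[OF this, of x] show ?thesis unfolding fc_def f1_def by (simp add: fun_eq_iff)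
qed

lemma f1_deriv: "(f1 n has_real_derivative f2 n x) (at x)"
proof -
  have "continuous_on UNIV (\<lambda>t. - 2 * sin t * cos (2 * real n * t))" by (intro continuous_intros)
  from deriv_gen[OF this, of x] show ?thesis unfolding f1_def f2_def by (simp add: fun_eq_iff)
qed

lemma sin2npi: "sin (2 * real n * pi) = 0"
  by (metis mult.commute mult.left_commute sin_npi of_nat_mult of_nat_numeral)
lemma cos2npi: "cos (2 * real n * pi) = 1"
  by (metis cos_one_2pi_int mult.commute mult.left_commute of_int_of_nat_eq)

lemma ring_aux:
  fixes x s c E m :: real
  shows "x\<^sup>2 * ((- 2 * s * (- 2 * s * c)) * E) + x * ((- 2 * s * c) * E) - 4 * (x\<^sup>2 + m\<^sup>2) * (c * E) =
    - ((4 * x\<^sup>2 * (1 - s\<^sup>2) + 2 * x * s + 4 * m\<^sup>2) * (c * E))"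
  by (simp add: algebra_simps power2_eq_square)

lemma ode: "x\<^sup>2 * f2 n x + x * f1 n x - 4 * (x\<^sup>2 + (real n)\<^sup>2) * fc n x = - 4 * x"
proof -
  let ?E = "\<lambda>t. exp (- 2 * x * sin t)"
  let ?A = "\<lambda>t. (- 2 * sin t * (- 2 * sin t * cos (2 * real n * t))) * ?E t"
  let ?B = "\<lambda>t. (- 2 * sin t * cos (2 * real n * t)) * ?E t"
  let ?C = "\<lambda>t. cos (2 * real n * t) * ?E t"
  have iA: "(?A has_integral f2 n x) {0..pi}" unfolding f2_def
    by (intro integrable_integral integrable_continuous_interval continuous_intros)
  have iB: "(?B has_integral f1 n x) {0..pi}" unfolding f1_def
    by (intro integrable_integral integrable_continuous_interval continuous_intros)
  have iC: "(?C has_integral fc n x) {0..pi}" unfolding fc_def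
    by (intro integrable_integral integrable_continuous_interval continuous_intros)
  have i1: "((\<lambda>t. x\<^sup>2 * ?A t + x * ?B t - 4 * (x\<^sup>2 + (real n)\<^sup>2) * ?C t) has_integral
      (x\<^sup>2 * f2 n x + x * f1 n x - 4 * (x\<^sup>2 + (real n)\<^sup>2) * fc n x)) {0..pi}"
    by (intro has_integral_diff has_integral_add has_integral_mult_right iA iB iC)
  have i2: "((\<lambda>t. - ((4 * x\<^sup>2 * (cos t)\<^sup>2 + 2 * x * sin t + 4 * (real n)\<^sup>2) * (cos (2 * real n * t) * exp (- 2 * x * sin t))))
          has_integral - (4 * x)) {0..pi}"
    by (intro has_integral_neg ftc_main)
  have eq: "(\<lambda>t. x\<^sup>2 * ?A t + x * ?B t - 4 * (x\<^sup>2 + (real n)\<^sup>2) * ?C t) =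
      (\<lambda>t. - ((4 * x\<^sup>2 * (cos t)\<^sup>2 + 2 * x * sin t + 4 * (real n)\<^sup>2) * (cos (2 * real n * t) * exp (- 2 * x * sin t))))"
  proof
    fix t
    show "x\<^sup>2 * ?A t + x * ?B t - 4 * (x\<^sup>2 + (real n)\<^sup>2) * ?C t =
      - ((4 * x\<^sup>2 * (cos t)\<^sup>2 + 2 * x * sin t + 4 * (real n)\<^sup>2) * (cos (2 * real n * t) * exp (- 2 * x * sin t)))"
      unfolding cos_squared_eq by (rule ring_aux)
  qed
  show ?thesis using has_integral_unique[OF i1[unfolded eq] i2] by simp
qed

lemma fc_zero: assumes "n \<ge> 1" shows "fc n 0 = 0"
proof -
  have der: "((\<lambda>t. sin (2 * real n * t) / (2 * real n)) has_vector_derivative cos (2 * real n * t)) (at t within {0..pi})" for t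
    unfolding has_real_derivative_iff_has_vector_derivative[symmetric]
    using assms by (auto intro!: derivative_eq_intros)
  have "integral {0..pi} (\<lambda>t. cos (2 * real n * t)) = sin (2 * real n * pi) / (2 * real n) - sin (2 * real n * 0) / (2 * real n)"
    by (rule integral_unique[OF fundamental_theorem_of_calculus[OF pi_ge_zero der]])
  also have "\<dots> = 0" by (simp add: sin2npi)
  finally show ?thesis by (simp add: fc_def)
qed

lemma fc_lim: "(\<lambda>k. fc n (real k)) \<longlonglongrightarrow> 0"
proof -
  let ?S = "{0<..<pi}"
  have "(\<lambda>k. integral ?S (\<lambda>t. cos (2 * real n * t) * exp (- 2 * real k * sin t))) \<longlonglongrightarrow> integral ?S (\<lambda>t. 0::real)"
  proof (rule dominated_convergence(2))
    fix k :: nat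
    show "(\<lambda>t. cos (2 * real n * t) * exp (- 2 * real k * sin t)) integrable_on ?S"
      unfolding integrable_on_open_interval_real
      by (intro integrable_continuous_interval continuous_intros)
  next
    show "(\<lambda>t. 1::real) integrable_on ?S"
      unfolding integrable_on_open_interval_real by (intro integrable_continuous_interval continuous_intros)
  next
    fix k :: nat and t :: real assume t: "t \<in> ?S"
    then have "sin t \<ge> 0" by (intro sin_ge_zero) auto
    then have "exp (- 2 * real k * sin t) \<le> 1" by simp
    moreover have "\<bar>cos (2 * real n * t)\<bar> \<le> 1" by simp
    ultimately show "norm (cos (2 * real n * t) * exp (- 2 * real k * sin t)) \<le> 1"
      by (simp add: abs_mult mult_le_one)
  next
    fix t :: real assume t: "t \<in> ?S"
    then have st: "sin t > 0" by (intro sin_gt_zero) auto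
    have "(\<lambda>k. exp (- 2 * sin t) ^ k) \<longlonglongrightarrow> 0"
      by (rule LIMSEQ_power_zero) (use st in simp)
    moreover have "exp (- 2 * real k * sin t) = exp (- 2 * sin t) ^ k" for k
      by (metis exp_of_nat_mult mult.commute mult.left_commute mult_minus_left)
    ultimately have "(\<lambda>k. exp (- 2 * real k * sin t)) \<longlonglongrightarrow> 0" by simp
    then show "(\<lambda>k. cos (2 * real n * t) * exp (- 2 * real k * sin t)) \<longlonglongrightarrow> 0"
      using tendsto_mult[OF tendsto_const, of _ 0 sequentially "cos (2 * real n * t)"] by simp
  qed
  moreover have "fc n (real k) = integral ?S (\<lambda>t. cos (2 * real n * t) * exp (- 2 * real k * sin t))" for k
    unfolding fc_def by (rule integral_open_interval_real)
  ultimately show ?thesis by simp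
qed

lemma refl_zero:
  fixes h :: "real \<Rightarrow> real"
  assumes "\<And>t. h (pi - t) = - h t"
  shows "integral {0..pi} h = 0"
proof -
  have "integral {0-pi..pi-pi} (\<lambda>x. h (x + pi)) = integral {0..pi} h"
    by (rule integral_shift_real_ivl)
  moreover have "integral {- 0 .. - (- pi)} (\<lambda>x. h (- x + pi)) = integral {-pi..0} (\<lambda>x. h (x + pi))"
    by (rule Henstock_Kurzweil_Integration.integral_reflect_real[where a="-pi" and b=0 and f="\<lambda>x. h (x + pi)"])
  moreover have "{- 0 .. - (- pi)} = {0..pi::real}" by simp
  moreover have "(\<lambda>x. h (- x + pi)) = (\<lambda>x. h (pi - x))" by (simp add: algebra_simps)
  ultimately have "integral {0..pi} (\<lambda>x. h (pi - x)) = integral {0..pi} h" by simp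
  then have "integral {0..pi} (\<lambda>x. - h x) = integral {0..pi} h" using assms by simp
  then show ?thesis by (simp add: integral_neg)
qed

lemma phi_parts: "Re (phi n x) = fc n x \<and> Im (phi n x) = 0"
proof -
  let ?F = "\<lambda>\<eta>. complex_of_real (exp (- 2 * x * sin \<eta>)) * exp (\<i> * of_real (2 * real n * \<eta>))"
  have "?F integrable_on {0..pi}"
    by (intro integrable_continuous_interval continuous_intros)
  then have hi: "(?F has_integral phi n x) {0..pi}" unfolding phi_def by (rule integrable_integral)
  have re: "Re (?F t) = cos (2 * real n * t) * exp (- 2 * x * sin t)" for t
    by (simp add: Re_exp Im_exp)
  have im: "Im (?F t) = exp (- 2 * x * sin t) * sin (2 * real n * t)" for t
    by (simp add: Re_exp Im_exp)
  have "((\<lambda>t. cos (2 * real n * t) * exp (- 2 * x * sin t)) has_integral Re (phi n x)) {0..pi}"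
    using has_integral_Re[OF hi] unfolding re .
  then have 1: "Re (phi n x) = fc n x" unfolding fc_def by (rule integral_unique[symmetric])
  have "((\<lambda>t. exp (- 2 * x * sin t) * sin (2 * real n * t)) has_integral Im (phi n x)) {0..pi}"
    using has_integral_Im[OF hi] unfolding im .
  moreover have "integral {0..pi} (\<lambda>t. exp (- 2 * x * sin t) * sin (2 * real n * t)) = 0"
  proof (rule refl_zero)
    fix t
    have "sin (2 * real n * (pi - t)) = sin (2 * real n * pi - 2 * real n * t)" by (simp add: algebra_simps)
    also have "\<dots> = - sin (2 * real n * t)" by (simp add: sin_diff sin2npi cos2npi)
    finally show "exp (- 2 * x * sin (pi - t)) * sin (2 * real n * (pi - t)) = - (exp (- 2 * x * sin t) * sin (2 * real n * t))"
      by simp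
  qed
  ultimately have "Im (phi n x) = 0" using integral_unique by metis
  with 1 show ?thesis by simp
qed


lemma fc_pos: assumes "n \<ge> 1" "x > 0" shows "fc n x > 0"
proof (rule maxp[where D="fc n" and Dp="f1 n" and Dq="f2 n" and c="\<lambda>x. 4 * (x\<^sup>2 + (real n)\<^sup>2)"])
  show "(fc n has_real_derivative f1 n x) (at x)" for x by (rule fc_deriv)
  show "(f1 n has_real_derivative f2 n x) (at x)" for x by (rule f1_deriv)
  show "x\<^sup>2 * f2 n x + x * f1 n x - 4 * (x\<^sup>2 + (real n)\<^sup>2) * fc n x < 0" if "x > 0" for x
    using ode[of x n] that by simp
  show "0 \<le> 4 * (x\<^sup>2 + (real n)\<^sup>2)" for x by simp
  show "fc n 0 = 0" by (rule fc_zero[OF assms(1)])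
  show "(\<lambda>k. fc n (real k)) \<longlonglongrightarrow> 0" by (rule fc_lim)
  show "x > 0" by (rule assms(2))
qed

lemma ring_aux2:
  fixes x a b c a' b' c' m :: real
  shows "x\<^sup>2 * (a - a') + x * (b - b') - 4 * (x\<^sup>2 + m\<^sup>2) * (c - c') =
     (x\<^sup>2 * a + x * b - 4 * (x\<^sup>2 + m\<^sup>2) * c) - (x\<^sup>2 * a' + x * b' - 4 * (x\<^sup>2 + (m + 1)\<^sup>2) * c')
     - 4 * (2 * m + 1) * c'"
  by (simp add: algebra_simps power2_eq_square)

lemma fc_mono: assumes n: "n \<ge> 1" and x0: "x > 0" shows "fc (Suc n) x < fc n x"
proof -
  define D where "D = (\<lambda>x. fc n x - fc (Suc n) x)"
  define Dp where "Dp = (\<lambda>x. f1 n x - f1 (Suc n) x)"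
  define Dq where "Dq = (\<lambda>x. f2 n x - f2 (Suc n) x)"
  define c where "c = (\<lambda>x::real. 4 * (x\<^sup>2 + (real n)\<^sup>2))"
  have d1: "(D has_real_derivative Dp y) (at y)" for y
    unfolding D_def Dp_def by (intro DERIV_diff fc_deriv)
  have d2: "(Dp has_real_derivative Dq y) (at y)" for y
    unfolding Dp_def Dq_def by (intro DERIV_diff f1_deriv)
  have L: "y\<^sup>2 * Dq y + y * Dp y - c y * D y < 0" if y: "y > 0" for y
  proof -
    have e1: "y\<^sup>2 * f2 n y + y * f1 n y - 4 * (y\<^sup>2 + (real n)\<^sup>2) * fc n y = - 4 * y" by (rule ode)
    have e2': "y\<^sup>2 * f2 (Suc n) y + y * f1 (Suc n) y - 4 * (y\<^sup>2 + (real (Suc n))\<^sup>2) * fc (Suc n) y = - 4 * y" by (rule ode)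
    have rs: "real (Suc n) = real n + 1" by simp
    have e2: "y\<^sup>2 * f2 (Suc n) y + y * f1 (Suc n) y - 4 * (y\<^sup>2 + (real n + 1)\<^sup>2) * fc (Suc n) y = - 4 * y"
      using e2' unfolding rs .
    have p: "fc (Suc n) y > 0" using fc_pos[of "Suc n" y] y by simp
    have q: "4 * (2 * real n + 1) * fc (Suc n) y > 0" using p by simp
    have "y\<^sup>2 * Dq y + y * Dp y - c y * D y =
       (y\<^sup>2 * f2 n y + y * f1 n y - 4 * (y\<^sup>2 + (real n)\<^sup>2) * fc n y)
       - (y\<^sup>2 * f2 (Suc n) y + y * f1 (Suc n) y - 4 * (y\<^sup>2 + (real n + 1)\<^sup>2) * fc (Suc n) y)
       - 4 * (2 * real n + 1) * fc (Suc n) y"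
      unfolding D_def Dp_def Dq_def c_def by (rule ring_aux2)
    also have "\<dots> = - 4 * (2 * real n + 1) * fc (Suc n) y" unfolding e1 e2 by (simp add: algebra_simps)
    finally show ?thesis using q by linarith
  qed
  have c0: "c y \<ge> 0" for y unfolding c_def by simp
  have D0: "D 0 = 0" unfolding D_def using fc_zero[OF n] fc_zero[of "Suc n"] n by simp
  have lim: "(\<lambda>k. D (real k)) \<longlonglongrightarrow> 0"
    unfolding D_def using tendsto_diff[OF fc_lim[of n] fc_lim[of "Suc n"]] by simp
  have "D x > 0" by (rule maxp[OF d1 d2 L c0 D0 lim x0])
  then show ?thesis unfolding D_def by simp
qed

theorem proposition3p2:
  shows "(\<forall>n::nat. \<forall>x::real. n \<ge> 1 \<longrightarrow> x > 0 \<longrightarrow>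
            Im (phi n x) = 0 \<and> Re (phi n x) > 0)
       \<and> (\<forall>x::real. x > 0 \<longrightarrow>
            (\<forall>n::nat. n \<ge> 1 \<longrightarrow> Re (phi (Suc n) x) < Re (phi n x)))"
proof -
  have A: "Im (phi n x) = 0 \<and> Re (phi n x) > 0" if a: "n \<ge> 1" "x > 0" for n :: nat and x :: real
  proof -
    have "Re (phi n x) = fc n x" "Im (phi n x) = 0" using phi_parts[of n x] by auto
    then show ?thesis using fc_pos[OF a] by simp
  qed
  have B: "Re (phi (Suc n) x) < Re (phi n x)" if a: "x > 0" "n \<ge> 1" for n :: nat and x :: real
  proof -
    have "Re (phi n x) = fc n x" "Re (phi (Suc n) x) = fc (Suc n) x"
      using phi_parts[of n x] phi_parts[of "Suc n" x] by auto
    then show ?thesis using fc_mono[OF a(2) a(1)] by simp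
  qed
  show ?thesis using A B by blast
qed

end
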